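(* Let $\rho\ge 0$ and let $t=(\sqrt{1+8\rho}-1)/(2\rho)$ if $\rho>0$ and $t=2$ if $\rho=0$. In the two-dimensional Poisson regression model with interaction, the design $\xi_t$ which assigns equal weights $1/4$ to the four settings $\mathbf{x}_0=(0,0)$, $\mathbf{x}_1=(2,0)$, $\mathbf{x}_2=(0,2)$ and $\mathbf{x}_3=(t,t)$ is locally $D$-optimal at $\boldsymbol{\beta}=(0,-1,-1,-\rho)^\top$ on $\mathcal{X}=[0,\infty)^2$.
   Context: In the two-dimensional Poisson regression model with interaction, an observation $Y$ at setting $\mathbf{x}=(x_1,x_2)$ is Poisson distributed with mean $\lambda(\mathbf{x})=\exp(\mathbf{f}(\mathbf{x})^\top\boldsymbol{\beta})$, where $\mathbf{f}(\mathbf{x})=(1,x_1,x_2,x_1x_2)^\top$ and $\boldsymbol{\beta}=(\beta_0,\beta_1,\beta_2,\beta_{12})^\top$. An (approximate) design $\xi$ on $\mathcal{X}$ is a finite collection of mutually distinct settings $\mathbf{x}_0,\dots,\mathbf{x}_{n-1}\in\mathcal{X}$ with weights $w_i\ge 0$, $\sum_i w_i=1$; its information matrix is $\mathbf{M}_{\boldsymbol{\beta}}(\xi)=\sum_i w_i\lambda(\mathbf{x}_i)\mathbf{f}(\mathbf{x}_i)\mathbf{f}(\mathbf{x}_i)^\top$. A design is locally $D$-optimal at $\boldsymbol{\beta}$ on $\mathcal{X}$ if it maximizes $\det\mathbf{M}_{\boldsymbol{\beta}}(\xi)$ over all designs on $\mathcal{X}$. *)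

theory Defs
  imports "HOL-Analysis.Analysis"
begin

definition regf :: "real \<times> real \<Rightarrow> real ^ 4" where
  "regf x = vector [1, fst x, snd x, fst x * snd x]"

definition intensity :: "real ^ 4 \<Rightarrow> real \<times> real \<Rightarrow> real" where
  "intensity \<beta> x = exp (regf x \<bullet> \<beta>)"

definition is_design :: "(real \<times> real) set \<Rightarrow> (real \<times> real) set \<Rightarrow> (real \<times> real \<Rightarrow> real) \<Rightarrow> bool" where
  "is_design X S w \<longleftrightarrow> finite S \<and> S \<noteq> {} \<and> S \<subseteq> X \<and> (\<forall>x\<in>S. w x \<ge> 0) \<and> (\<Sum>x\<in>S. w x) = 1"

definition info_matrix :: "real ^ 4 \<Rightarrow> (real \<times> real) set \<Rightarrow> (real \<times> real \<Rightarrow> real) \<Rightarrow> real ^ 4 ^ 4" where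
  "info_matrix \<beta> S w = (\<Sum>x\<in>S. (w x * intensity \<beta> x) *\<^sub>R
      (\<chi> i j. regf x $ i * regf x $ j))"

definition locally_D_optimal :: "real ^ 4 \<Rightarrow> (real \<times> real) set \<Rightarrow> (real \<times> real) set \<Rightarrow> (real \<times> real \<Rightarrow> real) \<Rightarrow> bool" where
  "locally_D_optimal \<beta> X S w \<longleftrightarrow> is_design X S w \<and>
     (\<forall>S' w'. is_design X S' w' \<longrightarrow> det (info_matrix \<beta> S' w') \<le> det (info_matrix \<beta> S w))"

end

theory Submission
  imports Defs
begin


lemma sign_change_max:
  fixes f f' :: "real \<Rightarrow> real"
  assumes "a \<le> c" "c \<le> b"
    and der: "\<And>x. a \<le> x \<Longrightarrow> x \<le> b \<Longrightarrow> DERIV f x :> f' x"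
    and neg: "\<And>x. a \<le> x \<Longrightarrow> x \<le> c \<Longrightarrow> f' x \<le> 0"
    and pos: "\<And>x. c \<le> x \<Longrightarrow> x \<le> b \<Longrightarrow> f' x \<ge> 0"
    and "a \<le> x" "x \<le> b"
  shows "f x \<le> max (f a) (f b)"
proof (cases "x \<le> c")
  case True
  have "f x \<le> f a"
  proof (rule DERIV_nonpos_imp_nonincreasing[OF \<open>a \<le> x\<close>])
    fix y assume "a \<le> y" "y \<le> x"
    have "y \<le> c" "y \<le> b" using True \<open>y \<le> x\<close> \<open>c \<le> b\<close> by linarith+
    then show "\<exists>d. DERIV f y :> d \<and> d \<le> 0" using der[of y] neg[of y] \<open>a \<le> y\<close> by blast
  qed
  then show ?thesis by simp
next
  case False
  have "f b \<ge> f x"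
  proof (rule DERIV_nonneg_imp_nondecreasing[OF \<open>x \<le> b\<close>])
    fix y assume "x \<le> y" "y \<le> b"
    have "c \<le> y" "a \<le> y" using False \<open>x \<le> y\<close> \<open>a \<le> x\<close> by linarith+
    then show "\<exists>d. DERIV f y :> d \<and> d \<ge> 0" using der[of y] pos[of y] \<open>y \<le> b\<close> by blast
  qed
  then show ?thesis by simp
qed

lemma exp2_ge: "exp (2::real) \<ge> 4"
proof -
  have "exp (1::real) \<ge> 2" using exp_ge_add_one_self[of "1::real"] by simp
  then have "exp 1 * exp 1 \<ge> (2::real) * 2" by (intro mult_mono) auto
  moreover have "exp (2::real) = exp 1 * exp 1" using exp_add[of "1::real" 1] by simp
  ultimately show ?thesis by simp
qed

lemma axis_ineq:
  fixes s :: real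
  assumes s: "s \<ge> 0"
  shows "(1 - s/2)^2 + exp 2 * s^2/4 \<le> exp s"
proof -
  define E where "E = exp (2::real)"
  have E4: "E \<ge> 4" using exp2_ge by (simp add: E_def)
  define q where "q s = (1 - s/2)^2 + E * s^2/4" for s :: real
  define \<Psi> where "\<Psi> s = q s * exp (-s)" for s :: real
  define \<Psi>' where "\<Psi>' s = (-(1+E)/4) * ((s - 4/(1+E)) * (s - 2)) * exp (-s)" for s :: real
  have der: "DERIV \<Psi> x :> \<Psi>' x" for x
  proof -
    have "DERIV \<Psi> x :> ((-(1 - x/2) + E * x/2) * exp (-x) - q x * exp (-x))"
      unfolding \<Psi>_def q_def
      by (auto intro!: derivative_eq_intros simp: power2_eq_square field_simps)
    moreover have "((-(1 - x/2) + E * x/2) * exp (-x) - q x * exp (-x)) = \<Psi>' x"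
      unfolding \<Psi>'_def q_def using E4 by (simp add: field_simps power2_eq_square)
    ultimately show ?thesis by simp
  qed
  have P0: "\<Psi> 0 = 1" by (simp add: \<Psi>_def q_def)
  have P2: "\<Psi> 2 = 1" by (simp add: \<Psi>_def q_def E_def exp_minus field_simps)
  have r0: "0 \<le> 4/(1+E)" "4/(1+E) \<le> 2" using E4 by (auto simp: field_simps)
  have "\<Psi> s \<le> 1"
  proof (cases "s \<le> 2")
    case True
    have "\<Psi> s \<le> max (\<Psi> 0) (\<Psi> 2)"
    proof (rule sign_change_max[OF r0 _ _ _ s True])
      show "DERIV \<Psi> x :> \<Psi>' x" for x by (rule der)
      show "\<Psi>' x \<le> 0" if "0 \<le> x" "x \<le> 4/(1+E)" for x
      proof -
        have "(x - 4/(1+E)) * (x - 2) \<ge> 0" using that r0 by (intro mult_nonpos_nonpos) auto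
        then have "(-(1+E)/4) * ((x - 4/(1+E)) * (x - 2)) \<le> 0" using E4
          by (intro mult_nonpos_nonneg) auto
        then show ?thesis using mult_nonpos_nonneg[OF _ exp_ge_zero] unfolding \<Psi>'_def by blast
      qed
      show "\<Psi>' x \<ge> 0" if "4/(1+E) \<le> x" "x \<le> 2" for x
      proof -
        have "(x - 4/(1+E)) * (x - 2) \<le> 0" using that r0 by (intro mult_nonneg_nonpos) auto
        then have "(-(1+E)/4) * ((x - 4/(1+E)) * (x - 2)) \<ge> 0" using E4
          by (intro mult_nonpos_nonpos) auto
        then show ?thesis using mult_nonneg_nonneg[OF _ exp_ge_zero] unfolding \<Psi>'_def by blast
      qed
    qed
    then show ?thesis using P0 P2 by simp
  next
    case False
    have "\<Psi> s \<le> \<Psi> 2"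
    proof (rule DERIV_nonpos_imp_nonincreasing[of 2 s])
      show "2 \<le> s" using False by simp
      fix y assume y: "2 \<le> y" "y \<le> s"
      have "(y - 4/(1+E)) * (y - 2) \<ge> 0" using y r0 by (intro mult_nonneg_nonneg) auto
      then have "(-(1+E)/4) * ((y - 4/(1+E)) * (y - 2)) \<le> 0" using E4
        by (intro mult_nonpos_nonneg) auto
      then have "\<Psi>' y \<le> 0" using mult_nonpos_nonneg[OF _ exp_ge_zero] unfolding \<Psi>'_def by blast
      then show "\<exists>d. DERIV \<Psi> y :> d \<and> d \<le> 0" using der by blast
    qed
    then show ?thesis using P2 by simp
  qed
  then have "q s * exp (-s) * exp s \<le> 1 * exp s"
    unfolding \<Psi>_def by (intro mult_right_mono) auto
  then have "q s \<le> exp s" by (simp add: mult.assoc exp_minus_inverse[of "-s", simplified])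
  then show ?thesis unfolding q_def E_def .
qed


lemma mono_factor_max:
  fixes \<Phi> G h :: "real \<Rightarrow> real"
  assumes "a \<le> x" "x \<le> b"
    and der: "\<And>y. a \<le> y \<Longrightarrow> y \<le> b \<Longrightarrow> DERIV \<Phi> y :> h y * G y"
    and hpos: "\<And>y. h y > 0"
    and mono: "\<And>y z. a \<le> y \<Longrightarrow> y \<le> z \<Longrightarrow> z \<le> b \<Longrightarrow> G y \<le> G z"
  shows "\<Phi> x \<le> max (\<Phi> a) (\<Phi> b)"
proof (cases "G x \<le> 0")
  case True
  have "\<Phi> x \<le> \<Phi> a"
  proof (rule DERIV_nonpos_imp_nonincreasing[OF \<open>a \<le> x\<close>])
    fix y assume y: "a \<le> y" "y \<le> x"
    have "G y \<le> 0" using mono[of y x] y \<open>x \<le> b\<close> True by linarith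
    then have "h y * G y \<le> 0" using hpos[of y] by (simp add: mult_nonneg_nonpos)
    then show "\<exists>d. DERIV \<Phi> y :> d \<and> d \<le> 0" using der[of y] y \<open>x \<le> b\<close> by auto
  qed
  then show ?thesis by simp
next
  case False
  have "\<Phi> x \<le> \<Phi> b"
  proof (rule DERIV_nonneg_imp_nondecreasing[OF \<open>x \<le> b\<close>])
    fix y assume y: "x \<le> y" "y \<le> b"
    have "G y \<ge> 0" using mono[of x y] y \<open>a \<le> x\<close> False by linarith
    then have "h y * G y \<ge> 0" using hpos[of y] by simp
    then show "\<exists>d. DERIV \<Phi> y :> d \<and> d \<ge> 0" using der[of y] y \<open>a \<le> x\<close> by auto
  qed
  then show ?thesis by simp
qed

lemma diag_ineq:
  fixes x t :: real
  assumes x: "x \<ge> 0" and t: "0 \<le> t" "t \<le> 2"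
  shows "(1-x)^2 * ((1-(t-1)*x)^2 + exp 2 * t^2 * x^2/2) + exp (t+2) * x^4
           \<le> exp (2*t*x + (2-t)*x^2)"
proof -
  define E where "E = exp (2::real)"
  have E4: "E \<ge> 4" using exp2_ge by (simp add: E_def)
  define k where "k = x*(2-x)"
  define C where "C = E * x^4"
  define a where "a \<tau> = (1-x)^2 * ((1+x-\<tau>*x)*(1+x-\<tau>*x) + E*x^2*\<tau>*\<tau>/2)" for \<tau> :: real
  define a' where "a' \<tau> = (1-x)^2 * (-2*x*(1+x-\<tau>*x) + E*x^2*\<tau>)" for \<tau> :: real
  define a'' where "a'' = (1-x)^2 * (2*x^2 + E*x^2)"
  define \<Phi> where "\<Phi> \<tau> = a \<tau> * exp(-k*\<tau>) + C * (exp(-k*\<tau>) * exp \<tau>)" for \<tau>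
  define G where "G \<tau> = a' \<tau> - k * a \<tau> + C*(1-k)*exp \<tau>" for \<tau>
  define G' where "G' \<tau> = a'' - k * a' \<tau> + C*(1-k)*exp \<tau>" for \<tau>
  have da: "DERIV a \<tau> :> a' \<tau>" for \<tau>
    unfolding a_def a'_def by (auto intro!: derivative_eq_intros simp: field_simps power2_eq_square)
  have da': "DERIV a' \<tau> :> a''" for \<tau>
    unfolding a''_def a'_def by (auto intro!: derivative_eq_intros simp: algebra_simps power2_eq_square)
  have dPhi: "DERIV \<Phi> \<tau> :> exp(-k*\<tau>) * G \<tau>" for \<tau>
  proof -
    have "DERIV \<Phi> \<tau> :> a' \<tau> * exp(-k*\<tau>) + a \<tau> * (exp(-k*\<tau>) * (-k))
           + C * ((exp(-k*\<tau>) * (-k)) * exp \<tau> + exp(-k*\<tau>) * exp \<tau>)"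
      unfolding \<Phi>_def
      by (rule derivative_eq_intros da refl | simp)+
    moreover have "a' \<tau> * exp(-k*\<tau>) + a \<tau> * (exp(-k*\<tau>) * (-k))
           + C * ((exp(-k*\<tau>) * (-k)) * exp \<tau> + exp(-k*\<tau>) * exp \<tau>) = exp(-k*\<tau>) * G \<tau>"
      unfolding G_def by (simp add: algebra_simps)
    ultimately show ?thesis by simp
  qed
  have dG: "DERIV G \<tau> :> G' \<tau>" for \<tau>
  proof -
    have "DERIV G \<tau> :> a'' - k * a' \<tau> + C*(1-k)*exp \<tau>"
      unfolding G_def
      by (rule derivative_eq_intros da da' refl | simp)+
    then show ?thesis unfolding G'_def .
  qed
  define W where "W \<tau> = (2+E)*(1 - k*\<tau>) + 2*(2-x)*(1+x) + E*x^2*exp \<tau>" for \<tau>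
  define Wl where "Wl \<tau> = (2+E)*(1 - k*\<tau>) + 2*(2-x)*(1+x) + E*x^2*(1+\<tau>)" for \<tau>
  have GW: "G' \<tau> = (1-x)^2 * x^2 * W \<tau>" for \<tau>
    unfolding G'_def W_def a''_def a'_def C_def k_def by (simp add: algebra_simps power2_eq_square power4_eq_xxxx)
  have Wl0: "Wl 0 \<ge> 0"
  proof -
    have "Wl 0 = 6 + E + 2*x + (E-2)*x^2" unfolding Wl_def by (simp add: algebra_simps power2_eq_square)
    moreover have "(E-2)*x^2 \<ge> 0" using E4 by simp
    ultimately show ?thesis using x E4 by linarith
  qed
  have Wl2: "Wl 2 \<ge> 0"
  proof -
    have "4*(2+5*E) * Wl 2 = (2*(2+5*E)*x - (6+4*E))^2 + (12 + 80*E + 4*E^2)"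
      unfolding Wl_def k_def by (simp add: algebra_simps power2_eq_square)
    moreover have "(2*(2+5*E)*x - (6+4*E))^2 + (12 + 80*E + 4*E^2) \<ge> 0" using E4 by simp
    ultimately have "4*(2+5*E) * Wl 2 \<ge> 0" by simp
    moreover have "4*(2+5*E) > 0" using E4 by simp
    ultimately show ?thesis by (simp add: zero_le_mult_iff)
  qed
  have Wpos: "W \<tau> \<ge> 0" if "0 \<le> \<tau>" "\<tau> \<le> 2" for \<tau>
  proof -
    have "Wl \<tau> = (1-\<tau>/2) * Wl 0 + (\<tau>/2) * Wl 2" unfolding Wl_def by (simp add: algebra_simps)
    moreover have "(1-\<tau>/2) * Wl 0 \<ge> 0" "(\<tau>/2) * Wl 2 \<ge> 0" using that Wl0 Wl2 by simp_all
    ultimately have "Wl \<tau> \<ge> 0" by linarith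
    moreover have "E*x^2*exp \<tau> \<ge> E*x^2*(1+\<tau>)" using E4
      by (intro mult_left_mono) (auto simp: add.commute)
    ultimately show ?thesis unfolding W_def Wl_def by linarith
  qed
  have Gmono: "G y \<le> G z" if "0 \<le> y" "y \<le> z" "z \<le> 2" for y z
  proof (rule DERIV_nonneg_imp_nondecreasing[OF \<open>y \<le> z\<close>])
    fix w assume "y \<le> w" "w \<le> z"
    then have "G' w \<ge> 0" unfolding GW using Wpos[of w] that by simp
    then show "\<exists>d. DERIV G w :> d \<and> d \<ge> 0" using dG by blast
  qed
  have "\<Phi> t \<le> max (\<Phi> 0) (\<Phi> 2)"
    by (rule mono_factor_max[OF t, of \<Phi> "\<lambda>\<tau>. exp(-k*\<tau>)" G]) (use dPhi Gmono in auto)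
  moreover have "\<Phi> 0 \<le> exp (2*x^2)"
  proof -
    have "\<Phi> 0 = (1 - (2*x^2)/2)^2 + exp 2 * (2*x^2)^2/4"
      unfolding \<Phi>_def a_def C_def E_def by (simp add: algebra_simps power2_eq_square power4_eq_xxxx)
    also have "\<dots> \<le> exp (2*x^2)" by (rule axis_ineq) simp
    finally show ?thesis .
  qed
  moreover have "\<Phi> 2 \<le> exp (2*x^2)"
  proof -
    have "\<Phi> 2 = exp(-k*2) * ((1 - (2*x)/2)^2 + exp 2 * (2*x)^2/4)^2"
      unfolding \<Phi>_def a_def C_def E_def by (simp add: algebra_simps power2_eq_square power4_eq_xxxx)
    also have "\<dots> \<le> exp(-k*2) * (exp (2*x))^2"
      by (intro mult_left_mono power_mono axis_ineq) (use x in auto)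
    also have "\<dots> = exp (2*x^2)"
    proof -
      have "exp(-k*2) * (exp (2*x))^2 = exp(-k*2 + (2*x + 2*x))"
        unfolding power2_eq_square exp_add by simp
      also have "-k*2 + (2*x + 2*x) = -k*2 + 4*x" by simp
      also have "-k*2 + 4*x = 2*x^2" unfolding k_def by (simp add: algebra_simps power2_eq_square)
      finally show ?thesis .
    qed
    finally show ?thesis .
  qed
  ultimately have "\<Phi> t \<le> exp (2*x^2)" by simp
  then have "\<Phi> t * exp (k*t) \<le> exp (2*x^2) * exp (k*t)" by (intro mult_right_mono) auto
  moreover have "\<Phi> t * exp (k*t) = (1-x)^2 * ((1-(t-1)*x)^2 + exp 2 * t^2 * x^2/2) + exp (t+2) * x^4"
  proof -
    have h1: "exp(-k*t) * exp (k*t) = 1" by (simp add: exp_minus)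
    have "\<Phi> t * exp (k*t) = (a t + C * exp t) * (exp(-k*t) * exp (k*t))"
      unfolding \<Phi>_def by (simp add: algebra_simps)
    also have "\<dots> = a t + C * exp t" using h1 by simp
    also have "\<dots> = (1-x)^2 * ((1-(t-1)*x)^2 + exp 2 * t^2 * x^2/2) + exp (t+2) * x^4"
      unfolding a_def C_def E_def by (simp add: algebra_simps power2_eq_square exp_add)
    finally show ?thesis .
  qed
  moreover have "exp (2*x^2) * exp (k*t) = exp (2*t*x + (2-t)*x^2)"
  proof -
    have "exp (2*x^2) * exp (k*t) = exp (2*x^2 + k*t)" by (simp add: exp_add)
    also have "2*x^2 + k*t = 2*t*x + (2-t)*x^2" unfolding k_def by (simp add: algebra_simps power2_eq_square)
    finally show ?thesis .
  qed
  ultimately show ?thesis by simp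
qed


definition Qg :: "real \<Rightarrow> real \<Rightarrow> real \<Rightarrow> real \<Rightarrow> real \<Rightarrow> real" where
  "Qg t E E3 \<sigma> \<pi> = (1 - t*\<sigma>/2 + (t-1)*\<pi>)^2 + E * t^2 * (\<sigma>^2 - 2*\<pi> - 2*\<pi>*\<sigma> + 2*\<pi>^2)/4 + E3 * \<pi>^2"

lemma Qg_convex_identity:
  "(1-\<theta>) * Qg t E E3 s1 p1 + \<theta> * Qg t E E3 s2 p2 - Qg t E E3 ((1-\<theta>)* s1 + \<theta>* s2) ((1-\<theta>)* p1 + \<theta>* p2)
   = \<theta>*(1-\<theta>) * ((-t*(s2-s1)/2 + (t-1)*(p2-p1))^2 + E*t^2*(((s2-s1)-(p2-p1))^2 + (p2-p1)^2)/4 + E3*(p2-p1)^2)"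
  unfolding Qg_def power2_eq_square by (simp add: field_simps)

lemma Qg_convex:
  assumes "0 \<le> \<theta>" "\<theta> \<le> 1" "E \<ge> 0" "E3 \<ge> 0"
  shows "Qg t E E3 ((1-\<theta>)* s1 + \<theta>* s2) ((1-\<theta>)* p1 + \<theta>* p2) \<le> (1-\<theta>) * Qg t E E3 s1 p1 + \<theta> * Qg t E E3 s2 p2"
proof -
  have "0 \<le> \<theta>*(1-\<theta>) * ((-t*(s2-s1)/2 + (t-1)*(p2-p1))^2 + E*t^2*(((s2-s1)-(p2-p1))^2 + (p2-p1)^2)/4 + E3*(p2-p1)^2)"
    using assms by (intro mult_nonneg_nonneg add_nonneg_nonneg) auto
  then show ?thesis using Qg_convex_identity[of \<theta> t E E3 s1 p1 s2 p2] by linarith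
qed

lemma main_ineq:
  fixes t a b :: real
  assumes t: "0 < t" "t \<le> 2" and ab: "a \<ge> 0" "b \<ge> 0"
  shows "Qg t (exp 2) (exp (t+2)) (a+b) (a*b) \<le> exp (t*(a+b) + (2-t)*(a*b))"
proof -
  define y where "y = t*(a+b) + (2-t)*(a*b)"
  have y0: "y \<ge> 0" unfolding y_def using t ab by simp
  define f where "f r = 2*t*r + (2-t)*r^2" for r :: real
  have "\<exists>r. 0 \<le> r \<and> r \<le> y/(2*t) \<and> f r = y"
  proof (rule IVT)
    show "f 0 \<le> y" using y0 by (simp add: f_def)
    have "(2-t)*(y/(2*t))^2 \<ge> 0" using t by simp
    then show "y \<le> f (y/(2*t))" using t by (simp add: f_def)
    show "0 \<le> y/(2*t)" using y0 t by simp
    show "\<forall>x. 0 \<le> x \<and> x \<le> y/(2*t) \<longrightarrow> isCont f x" unfolding f_def by (auto intro!: continuous_intros)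
  qed
  then obtain r where r: "0 \<le> r" "f r = y" by blast
  have pr: "a*b \<le> r^2"
  proof (rule ccontr)
    assume "\<not> a*b \<le> r^2"
    then have h: "a*b > r^2" by simp
    have "a + b > 2*r"
    proof (rule ccontr)
      assume "\<not> a + b > 2*r"
      then have "(a+b)^2 \<le> (2*r)^2" using ab by (intro power_mono) auto
      moreover have "(a+b)^2 \<ge> 4*(a*b)"
      proof -
        have "(a+b)^2 - 4*(a*b) = (a-b)^2" by (simp add: power2_eq_square algebra_simps)
        then show ?thesis by (metis diff_ge_0_iff_ge zero_le_power2)
      qed
      ultimately show False using h by (simp add: power2_eq_square)
    qed
    then have "t*(a+b) > t*(2*r)" using t by simp
    moreover have "(2-t)*(a*b) \<ge> (2-t)*r^2" using h t by (intro mult_left_mono) auto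
    ultimately have "y > f r" unfolding y_def f_def by simp
    then show False using r by simp
  qed
  define A1 where "A1 = y/t"
  define th where "th = (if r = 0 then 0 else (a*b)/r^2)"
  have th: "0 \<le> th" "th \<le> 1" using pr ab unfolding th_def by (auto simp: divide_le_eq_1)
  have pi_eq: "a*b = (1-th)*0 + th*r^2"
  proof (cases "r = 0")
    case True
    have "a*b \<ge> 0" using ab by simp
    then have "a*b = 0" using pr True by simp
    then show ?thesis using True unfolding th_def by simp
  next
    case False
    then show ?thesis unfolding th_def by simp
  qed
  have sig_eq: "a+b = (1-th)*A1 + th*(2*r)"
  proof -
    have "t*(a+b) = t*((1-th)*A1 + th*(2*r))"
    proof -
      have tA: "t*A1 = y" unfolding A1_def using t by simp
      have tr: "t*(2*r) = y - (2-t)*r^2" using r unfolding f_def by (simp add: algebra_simps)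
      have "t*((1-th)*A1 + th*(2*r)) = (1-th)*(t*A1) + th*(t*(2*r))" by (simp add: algebra_simps)
      also have "\<dots> = (1-th)*y + th*(y - (2-t)*r^2)" unfolding tA tr ..
      also have "\<dots> = y - (2-t)*(th*r^2)" by (simp add: algebra_simps)
      also have "\<dots> = t*(a+b)" using pi_eq unfolding y_def by simp
      finally show ?thesis by (rule sym)
    qed
    then show ?thesis using t by simp
  qed
  have QA: "Qg t (exp 2) (exp (t+2)) A1 0 \<le> exp y"
  proof -
    have "Qg t (exp 2) (exp (t+2)) A1 0 = (1 - y/2)^2 + exp 2 * y^2/4"
      unfolding Qg_def A1_def using t by (simp add: power2_eq_square field_simps)
    also have "\<dots> \<le> exp y" by (rule axis_ineq[OF y0])
    finally show ?thesis .
  qed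
  have QD: "Qg t (exp 2) (exp (t+2)) (2*r) (r^2) \<le> exp y"
  proof -
    have "Qg t (exp 2) (exp (t+2)) (2*r) (r^2) =
          (1-r)^2 * ((1-(t-1)*r)^2 + exp 2 * t^2 * r^2/2) + exp (t+2) * r^4"
      unfolding Qg_def by (simp add: power2_eq_square power4_eq_xxxx field_simps)
    also have "\<dots> \<le> exp (2*t*r + (2-t)*r^2)" by (rule diag_ineq) (use r t in auto)
    also have "\<dots> = exp y" using r unfolding f_def by simp
    finally show ?thesis .
  qed
  have "Qg t (exp 2) (exp (t+2)) (a+b) (a*b) \<le>
        (1-th) * Qg t (exp 2) (exp (t+2)) A1 0 + th * Qg t (exp 2) (exp (t+2)) (2*r) (r^2)"
    unfolding sig_eq pi_eq by (rule Qg_convex) (use th in auto)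
  also have "\<dots> \<le> (1-th) * exp y + th * exp y"
    using th QA QD by (intro add_mono mult_left_mono) auto
  also have "\<dots> = exp y" by (simp add: algebra_simps)
  finally show ?thesis unfolding y_def .
qed



lemma less4:
  "(0::4) < 1" "(1::4) < 2" "(2::4) < 3" "(0::4) < 2" "(0::4) < 3" "(1::4) < 3"
  "\<not> (1::4) < 0" "\<not> (2::4) < 1" "\<not> (3::4) < 2" "\<not> (2::4) < 0" "\<not> (3::4) < 0" "\<not> (3::4) < 1"
  by (simp_all add: less_bit0_def bit0.Rep_numeral bit0.Rep_0 bit0.Rep_1)

lemma exhaust4': "(k::4) = 0 \<or> k = 1 \<or> k = 2 \<or> k = 3"
  using exhaust_4[of k] by auto

lemma UNIV4': "(UNIV::4 set) = {0,1,2,3}"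
  using exhaust4' by auto

lemma sum4': "sum f (UNIV::4 set) = f 0 + f 1 + f 2 + f 3"
  unfolding UNIV4' by (simp add: ac_simps)

lemma lt4:
  "x < (0::4) \<longleftrightarrow> False" "x < (1::4) \<longleftrightarrow> x = 0" "x < (2::4) \<longleftrightarrow> x = 0 \<or> x = 1"
  "x < (3::4) \<longleftrightarrow> x = 0 \<or> x = 1 \<or> x = 2"
  using exhaust4'[of x] less4 by (elim disjE; simp)+

lemma lessThan4:
  "{..<(0::4)} = {}" "{..<(1::4)} = {0}" "{..<(2::4)} = {0,1}" "{..<(3::4)} = {0,1,2}"
  by (auto simp: lt4)

definition ipr :: "'a set \<Rightarrow> ('a \<Rightarrow> real) \<Rightarrow> ('a \<Rightarrow> real) \<Rightarrow> ('a \<Rightarrow> real) \<Rightarrow> real" where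
  "ipr S c \<alpha> \<beta> = (\<Sum>x\<in>S. c x * \<alpha> x * \<beta> x)"

definition mu :: "'a set \<Rightarrow> ('a \<Rightarrow> real) \<Rightarrow> ('a \<Rightarrow> real) \<Rightarrow> ('a \<Rightarrow> real) \<Rightarrow> real" where
  "mu S c h q = ipr S c h q / ipr S c q q"

lemma ipr_sym: "ipr S c \<alpha> \<beta> = ipr S c \<beta> \<alpha>"
  unfolding ipr_def by (simp add: mult_ac)

lemma ipr_nonneg: "(\<And>x. x \<in> S \<Longrightarrow> c x \<ge> 0) \<Longrightarrow> ipr S c q q \<ge> 0"
  unfolding ipr_def by (intro sum_nonneg) (simp add: mult.assoc)

lemma ipr_lin:
  "ipr S c (\<lambda>x. h x - (\<Sum>m\<in>J. a m * Q m x)) \<beta> = ipr S c h \<beta> - (\<Sum>m\<in>J. a m * ipr S c (Q m) \<beta>)"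
proof -
  have "ipr S c (\<lambda>x. h x - (\<Sum>m\<in>J. a m * Q m x)) \<beta> =
        (\<Sum>x\<in>S. c x * h x * \<beta> x) - (\<Sum>x\<in>S. \<Sum>m\<in>J. a m * (c x * Q m x * \<beta> x))"
    unfolding ipr_def by (simp add: algebra_simps sum_subtractf sum_distrib_left sum_distrib_right)
  also have "(\<Sum>x\<in>S. \<Sum>m\<in>J. a m * (c x * Q m x * \<beta> x)) = (\<Sum>m\<in>J. a m * ipr S c (Q m) \<beta>)"
    unfolding ipr_def by (subst sum.swap) (simp add: sum_distrib_left)
  finally show ?thesis unfolding ipr_def by simp
qed

lemma ipr_null:
  assumes "finite S" "\<And>x. x \<in> S \<Longrightarrow> c x \<ge> 0" "ipr S c q q = 0"
  shows "ipr S c q \<beta> = 0"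
proof -
  have "\<forall>x\<in>S. c x * q x * q x = 0"
    using assms unfolding ipr_def by (subst sum_nonneg_eq_0_iff[symmetric]) (auto simp: mult.assoc)
  then have "\<forall>x\<in>S. c x * q x * \<beta> x = 0" by auto
  then show ?thesis unfolding ipr_def by (rule sum.neutral)
qed

lemma mu_prop:
  assumes "finite S" "\<And>x. x \<in> S \<Longrightarrow> c x \<ge> 0"
  shows "ipr S c h q - mu S c h q * ipr S c q q = 0"
proof (cases "ipr S c q q = 0")
  case True
  then have "ipr S c q h = 0" using ipr_null assms by blast
  then show ?thesis using True by (simp add: ipr_sym)
next
  case False
  then show ?thesis unfolding mu_def by simp
qed

lemma gs_step:
  assumes S: "finite S" "\<And>x. x \<in> S \<Longrightarrow> c x \<ge> 0"
    and J: "finite J" "k \<in> J"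
    and orth: "\<And>m m'. m \<in> J \<Longrightarrow> m' \<in> J \<Longrightarrow> m \<noteq> m' \<Longrightarrow> ipr S c (Q m) (Q m') = 0"
  shows "ipr S c (\<lambda>x. h x - (\<Sum>m\<in>J. mu S c h (Q m) * Q m x)) (Q k) = 0"
proof -
  have "(\<Sum>m\<in>J. mu S c h (Q m) * ipr S c (Q m) (Q k)) = mu S c h (Q k) * ipr S c (Q k) (Q k)"
  proof -
    have "(\<Sum>m\<in>J. mu S c h (Q m) * ipr S c (Q m) (Q k)) =
          (\<Sum>m\<in>J. if m = k then mu S c h (Q k) * ipr S c (Q k) (Q k) else 0)"
      using orth J by (intro sum.cong) auto
    also have "\<dots> = mu S c h (Q k) * ipr S c (Q k) (Q k)" using J by simp
    finally show ?thesis .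
  qed
  then have "ipr S c (\<lambda>x. h x - (\<Sum>m\<in>J. mu S c h (Q m) * Q m x)) (Q k) =
      ipr S c h (Q k) - mu S c h (Q k) * ipr S c (Q k) (Q k)"
    by (simp only: ipr_lin)
  also have "\<dots> = 0" by (rule mu_prop[OF S])
  finally show ?thesis .
qed

lemma gram_hadamard:
  fixes g :: "4 \<Rightarrow> 'a \<Rightarrow> real"
  assumes S: "finite S" "\<And>x. x \<in> S \<Longrightarrow> c x \<ge> 0"
  shows "det (\<chi> i j. ipr S c (g i) (g j)) \<le> (\<Prod>i\<in>UNIV. ipr S c (g i) (g i))"
proof -
  let ?ip = "ipr S c" and ?mu = "mu S c"
  define q0 where "q0 = g 0"
  define q1 where "q1 = (\<lambda>x. g 1 x - ?mu (g 1) q0 * q0 x)"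
  define q2 where "q2 = (\<lambda>x. g 2 x - (?mu (g 2) q0 * q0 x + ?mu (g 2) q1 * q1 x))"
  define q3 where "q3 = (\<lambda>x. g 3 x - (?mu (g 3) q0 * q0 x + ?mu (g 3) q1 * q1 x + ?mu (g 3) q2 * q2 x))"
  define q where "q i = (if i = 0 then q0 else if i = 1 then q1 else if i = 2 then q2 else q3)" for i :: 4
  have qv: "q 0 = q0" "q 1 = q1" "q 2 = q2" "q 3 = q3" unfolding q_def by simp_all
  have qrec: "q i = (\<lambda>x. g i x - (\<Sum>m\<in>{..<i}. ?mu (g i) (q m) * q m x))" for i
    using exhaust4'[of i] by (auto simp: lessThan4 qv q0_def q1_def q2_def q3_def add.assoc)
  have o10: "?ip (q 1) (q 0) = 0"
    by (subst qrec) (rule gs_step[OF S], auto simp: lessThan4)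
  have o20: "?ip (q 2) (q 0) = 0" and o21: "?ip (q 2) (q 1) = 0"
    by (subst qrec, rule gs_step[OF S], auto simp: lessThan4 o10 ipr_sym[of S c "q 0" "q 1"])+
  have o3: "?ip (q 3) (q k) = 0" if "k \<in> {0,1,2}" for k
    by (subst qrec, rule gs_step[OF S]) (use that in \<open>auto simp: lessThan4 o10 o20 o21 ipr_sym[of S c "q 0" "q 1"] ipr_sym[of S c "q 0" "q 2"] ipr_sym[of S c "q 1" "q 2"]\<close>)
  have orth: "?ip (q k) (q m) = 0" if "k \<noteq> m" for k m
  proof -
    have "?ip (q k) (q m) = 0" if "m < k" for k m
      using exhaust4'[of k] exhaust4'[of m] that less4 o10 o20 o21 o3 by auto
    then show ?thesis using \<open>k \<noteq> m\<close> ipr_sym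
      by (metis linorder_neqE)
  qed
  define d where "d k = ?ip (q k) (q k)" for k
  have d0: "d k \<ge> 0" for k unfolding d_def using ipr_nonneg S by blast
  define L where "L i k = (if k = i then 1 else if k < i then ?mu (g i) (q k) else 0)" for i k :: 4
  have gdec: "g i x = (\<Sum>k\<in>UNIV. L i k * q k x)" for i x
  proof -
    have "g i x = q i x + (\<Sum>m\<in>{..<i}. ?mu (g i) (q m) * q m x)"
      using qrec[of i] by (metis (no_types, lifting) diff_add_cancel)
    then show ?thesis
      using exhaust4'[of i] by (auto simp: sum4' L_def less4 lessThan4)
  qed
  have Nentry: "?ip (g i) (g j) = (\<Sum>k\<in>UNIV. L i k * L j k * d k)" for i j
  proof -
    have "?ip (g i) (g j) = (\<Sum>k\<in>UNIV. \<Sum>m\<in>UNIV. L i k * L j m * ?ip (q k) (q m))"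
    proof -
      have "?ip (g i) (g j) = (\<Sum>x\<in>S. \<Sum>k\<in>UNIV. \<Sum>m\<in>UNIV. L i k * L j m * (c x * q k x * q m x))"
        unfolding ipr_def gdec[of i] gdec[of j]
        by (simp add: sum_distrib_left sum_distrib_right mult_ac)
      also have "\<dots> = (\<Sum>k\<in>UNIV. \<Sum>x\<in>S. \<Sum>m\<in>UNIV. L i k * L j m * (c x * q k x * q m x))"
        by (rule sum.swap)
      also have "\<dots> = (\<Sum>k\<in>UNIV. \<Sum>m\<in>UNIV. \<Sum>x\<in>S. L i k * L j m * (c x * q k x * q m x))"
        by (intro sum.cong refl) (rule sum.swap)
      also have "\<dots> = (\<Sum>k\<in>UNIV. \<Sum>m\<in>UNIV. L i k * L j m * ?ip (q k) (q m))"
        unfolding ipr_def by (simp add: sum_distrib_left)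
      finally show ?thesis .
    qed
    also have "\<dots> = (\<Sum>k\<in>UNIV. \<Sum>m\<in>UNIV. if m = k then L i k * L j k * d k else 0)"
      using orth unfolding d_def by (intro sum.cong refl) auto
    also have "\<dots> = (\<Sum>k\<in>UNIV. L i k * L j k * d k)" by simp
    finally show ?thesis .
  qed
  define Lm :: "real^4^4" where "Lm = (\<chi> i k. L i k)"
  define Dm :: "real^4^4" where "Dm = (\<chi> k m. if k = m then d k else 0)"
  have Neq: "(\<chi> i j. ?ip (g i) (g j)) = Lm ** Dm ** transpose Lm"
  proof -
    have "(Lm ** Dm ** transpose Lm) $ i $ j = (\<Sum>k\<in>UNIV. L i k * L j k * d k)" for i j
    proof -
      have "(Lm ** Dm) $ i $ k = L i k * d k" for k
        unfolding matrix_matrix_mult_def Lm_def Dm_def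
        by (simp add: if_distrib[of "\<lambda>z. L i _ * z"] cong: if_cong)
      moreover have "(Lm ** Dm ** transpose Lm) $ i $ j = (\<Sum>k\<in>UNIV. (Lm ** Dm)$i$k * (transpose Lm)$k$j)"
        by (simp add: matrix_matrix_mult_def[of "Lm ** Dm"])
      moreover have "(transpose Lm)$k$j = L j k" for k unfolding transpose_def Lm_def by simp
      ultimately show ?thesis by (simp add: mult_ac)
    qed
    then show ?thesis by (simp add: vec_eq_iff Nentry)
  qed
  have detL: "det Lm = 1"
  proof -
    have "det Lm = (\<Prod>i\<in>UNIV. Lm $ i $ i)"
      by (rule det_lowerdiagonal) (auto simp: Lm_def L_def)
    also have "\<dots> = 1" by (simp add: Lm_def L_def)
    finally show ?thesis .
  qed
  have detD: "det Dm = (\<Prod>i\<in>UNIV. d i)"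
    by (subst det_diagonal) (auto simp: Dm_def)
  have "det (\<chi> i j. ?ip (g i) (g j)) = (\<Prod>i\<in>UNIV. d i)"
    unfolding Neq det_mul det_transpose detL detD by simp
  also have "\<dots> \<le> (\<Prod>i\<in>UNIV. ?ip (g i) (g i))"
  proof (rule prod_mono)
    fix i :: 4
    have "L i i * L i i * d i \<le> (\<Sum>k\<in>UNIV. L i k * L i k * d k)"
      by (rule member_le_sum) (auto intro: mult_nonneg_nonneg d0)
    then show "0 \<le> d i \<and> d i \<le> ?ip (g i) (g i)" using d0[of i] by (simp add: Nentry L_def)
  qed
  finally show ?thesis .
qed


lemma vector_4 [simp]:
 "(vector [a,b,c,d] ::('a::zero)^4)$1 = a"
 "(vector [a,b,c,d] ::('a::zero)^4)$2 = b"
 "(vector [a,b,c,d] ::('a::zero)^4)$3 = c"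
 "(vector [a,b,c,d] ::('a::zero)^4)$4 = d"
  unfolding vector_def by simp_all

lemma four_eq_zero: "(4::4) = 0" by simp

lemma neq4: "(0::4) \<noteq> 1" "(0::4) \<noteq> 2" "(0::4) \<noteq> 3" "(1::4) \<noteq> 2" "(1::4) \<noteq> 3" "(2::4) \<noteq> 3"
  "(1::4) \<noteq> 0" "(2::4) \<noteq> 0" "(3::4) \<noteq> 0" "(2::4) \<noteq> 1" "(3::4) \<noteq> 1" "(3::4) \<noteq> 2"
  by simp_all

lemma prod4': "prod f (UNIV::4 set) = f 0 * f 1 * f 2 * f 3"
  unfolding UNIV4' by (simp add: ac_simps)

definition pts :: "real \<Rightarrow> 4 \<Rightarrow> real \<times> real" where
  "pts t i = (if i = 0 then (0,0) else if i = 1 then (2,0) else if i = 2 then (0,2) else (t,t))"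

definition lag :: "real \<Rightarrow> 4 \<Rightarrow> real \<times> real \<Rightarrow> real" where
  "lag t i x = (if i = 0 then 1 - (fst x + snd x)/2 + (t-1)*fst x* snd x/t^2
      else if i = 1 then fst x/2 - fst x* snd x/(2*t)
      else if i = 2 then snd x/2 - fst x* snd x/(2*t)
      else fst x* snd x/t^2)"

lemma pts_simps: "pts t 0 = (0,0)" "pts t 1 = (2,0)" "pts t 2 = (0,2)" "pts t 3 = (t,t)"
  unfolding pts_def by simp_all

lemma lag_simps:
  "lag t 0 x = 1 - (fst x + snd x)/2 + (t-1)*fst x* snd x/t^2"
  "lag t 1 x = fst x/2 - fst x* snd x/(2*t)"
  "lag t 2 x = snd x/2 - fst x* snd x/(2*t)"
  "lag t 3 x = fst x* snd x/t^2"
  unfolding lag_def by simp_all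

lemma regf_simps: "regf x $ 1 = 1" "regf x $ 2 = fst x" "regf x $ 3 = snd x" "regf x $ 4 = fst x * snd x"
  unfolding regf_def by simp_all

lemma regf_lag:
  assumes "t \<noteq> 0"
  shows "regf x $ j = (\<Sum>k\<in>UNIV. lag t k x * regf (pts t k) $ j)"
  using exhaust_4[of j] assms
  by (elim disjE) (simp_all add: sum4' lag_simps pts_simps regf_simps field_simps power2_eq_square del: vector_4)

lemma lag_pts:
  assumes "t \<noteq> 0"
  shows "lag t k (pts t m) = (if k = m then 1 else 0)"
  using exhaust4'[of k] exhaust4'[of m] assms
  by (elim disjE) (simp_all add: lag_simps pts_simps field_simps power2_eq_square neq4)

lemma inj_pts: "t \<noteq> 0 \<Longrightarrow> inj (pts t)"
  unfolding inj_def using exhaust4' by (metis lag_pts zero_neq_one)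

lemma info_factor:
  assumes "t \<noteq> 0"
  defines "F \<equiv> (\<chi> k j. regf (pts t k) $ j) :: real^4^4"
  shows "info_matrix \<beta> S w = transpose F **
           (\<chi> i j. ipr S (\<lambda>x. w x * intensity \<beta> x) (lag t i) (lag t j)) ** F"
proof -
  let ?c = "\<lambda>x. w x * intensity \<beta> x"
  let ?N = "(\<chi> i j. ipr S ?c (lag t i) (lag t j)) :: real^4^4"
  have "(transpose F ** ?N ** F) $ i $ j = info_matrix \<beta> S w $ i $ j" for i j
  proof -
    have "(transpose F ** ?N ** F) $ i $ j =
          (\<Sum>b\<in>UNIV. (\<Sum>a\<in>UNIV. F $ a $ i * ipr S ?c (lag t a) (lag t b)) * F $ b $ j)"
      by (simp add: matrix_matrix_mult_def transpose_def)
    also have "\<dots> = (\<Sum>b\<in>UNIV. \<Sum>a\<in>UNIV. \<Sum>x\<in>S. ?c x * ((lag t a x * F $ a $ i) * (lag t b x * F $ b $ j)))"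
      unfolding ipr_def by (simp add: sum_distrib_left sum_distrib_right mult_ac)
    also have "\<dots> = (\<Sum>b\<in>UNIV. \<Sum>x\<in>S. \<Sum>a\<in>UNIV. ?c x * ((lag t a x * F $ a $ i) * (lag t b x * F $ b $ j)))"
      by (intro sum.cong refl) (rule sum.swap)
    also have "\<dots> = (\<Sum>x\<in>S. \<Sum>b\<in>UNIV. \<Sum>a\<in>UNIV. ?c x * ((lag t a x * F $ a $ i) * (lag t b x * F $ b $ j)))"
      by (rule sum.swap)
    also have "\<dots> = (\<Sum>x\<in>S. ?c x * ((\<Sum>a\<in>UNIV. lag t a x * F $ a $ i) * (\<Sum>b\<in>UNIV. lag t b x * F $ b $ j)))"
      by (simp add: sum_distrib_left sum_distrib_right mult_ac)
    also have "\<dots> = (\<Sum>x\<in>S. ?c x * (regf x $ i * regf x $ j))"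
    proof -
      have "(\<Sum>a\<in>UNIV. lag t a x * F $ a $ i) = regf x $ i" for x i
        unfolding F_def vec_lambda_beta by (rule regf_lag[OF \<open>t \<noteq> 0\<close>, symmetric])
      then show ?thesis by simp
    qed
    also have "\<dots> = info_matrix \<beta> S w $ i $ j"
      unfolding info_matrix_def by simp
    finally show ?thesis .
  qed
  then show ?thesis by (simp add: vec_eq_iff)
qed

lemma det_info:
  assumes "t \<noteq> 0"
  shows "det (info_matrix \<beta> S w) = det ((\<chi> k j. regf (pts t k) $ j) :: real^4^4) ^ 2 *
           det ((\<chi> i j. ipr S (\<lambda>x. w x * intensity \<beta> x) (lag t i) (lag t j)) :: real^4^4)"
  unfolding info_factor[OF assms] det_mul det_transpose by (simp add: power2_eq_square)

lemma amgm4: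
  fixes y :: "4 \<Rightarrow> real"
  assumes "\<And>i. y i \<ge> 0"
  shows "(\<Prod>i\<in>UNIV. y i) \<le> ((\<Sum>i\<in>UNIV. y i)/4)^4"
proof -
  have am2: "p*q \<le> ((p+q)/2)^2" for p q :: real
  proof -
    have "((p+q)/2)^2 - p*q = ((p-q)/2)^2" by (simp add: power2_eq_square field_simps)
    then show ?thesis by (metis diff_ge_0_iff_ge zero_le_power2)
  qed
  define A where "A = (y 0 + y 1)/2"
  define B where "B = (y 2 + y 3)/2"
  have A0: "A \<ge> 0" "B \<ge> 0" unfolding A_def B_def using assms by (auto intro: add_nonneg_nonneg)
  have "y 0 * y 1 \<le> A^2" unfolding A_def by (rule am2)
  moreover have "y 2 * y 3 \<le> B^2" unfolding B_def by (rule am2)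
  ultimately have "(y 0 * y 1) * (y 2 * y 3) \<le> A^2 * B^2"
    using assms by (intro mult_mono) auto
  also have "\<dots> = (A*B)^2" by (simp add: power_mult_distrib)
  also have "\<dots> \<le> (((A+B)/2)^2)^2"
    using A0 by (intro power_mono am2) auto
  also have "\<dots> = ((\<Sum>i\<in>UNIV. y i)/4)^4"
    unfolding sum4' A_def B_def by (simp add: field_simps power2_eq_square power4_eq_xxxx)
  finally show ?thesis unfolding prod4' by (simp add: mult.assoc)
qed

lemma intensity_beta:
  "intensity (vector [0, -1, -1, -\<rho>]) x = exp (- fst x - snd x - \<rho> * (fst x * snd x))"
  unfolding intensity_def inner_vec_def
  by (simp add: sum_4 regf_simps algebra_simps)

lemma pointwise:
  assumes t: "0 < t" "t \<le> 2" and rho: "\<rho> * t^2 = 2 - t"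
    and x: "fst x \<ge> 0" "snd x \<ge> 0"
  shows "intensity (vector [0, -1, -1, -\<rho>]) x *
     (\<Sum>i\<in>UNIV. (lag t i x)^2 / intensity (vector [0, -1, -1, -\<rho>]) (pts t i)) \<le> 1"
proof -
  let ?u = "fst x" and ?v = "snd x"
  define a where "a = ?u / t"
  define b where "b = ?v / t"
  have ab: "a \<ge> 0" "b \<ge> 0" unfolding a_def b_def using t x by auto
  have l0: "intensity (vector [0, -1, -1, -\<rho>]) (pts t 0) = 1"
    by (simp add: intensity_beta pts_simps)
  have l1: "intensity (vector [0, -1, -1, -\<rho>]) (pts t 1) = inverse (exp 2)"
    by (simp add: intensity_beta pts_simps exp_minus[symmetric])
  have l2: "intensity (vector [0, -1, -1, -\<rho>]) (pts t 2) = inverse (exp 2)"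
    by (simp add: intensity_beta pts_simps exp_minus[symmetric])
  have l3: "intensity (vector [0, -1, -1, -\<rho>]) (pts t 3) = inverse (exp (t+2))"
  proof -
    have "- t - t - \<rho> * (t * t) = -(t+2)" using rho by (simp add: power2_eq_square algebra_simps)
    then have "intensity (vector [0, -1, -1, -\<rho>]) (pts t 3) = exp (-(t+2))"
      by (simp add: intensity_beta pts_simps)
    then show ?thesis by (simp only: exp_minus)
  qed
  have S: "(\<Sum>i\<in>UNIV. (lag t i x)^2 / intensity (vector [0, -1, -1, -\<rho>]) (pts t i))
        = Qg t (exp 2) (exp (t+2)) (a+b) (a*b)"
  proof -
    have "(\<Sum>i\<in>UNIV. (lag t i x)^2 / intensity (vector [0, -1, -1, -\<rho>]) (pts t i))
        = (lag t 0 x)^2 + exp 2 * (lag t 1 x)^2 + exp 2 * (lag t 2 x)^2 + exp (t+2) * (lag t 3 x)^2"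
      unfolding sum4' l0 l1 l2 l3 by (simp add: divide_inverse mult.commute)
    also have "\<dots> = Qg t (exp 2) (exp (t+2)) (a+b) (a*b)"
    proof -
      have u: "?u = t*a" and v: "?v = t*b" unfolding a_def b_def using t by auto
      show ?thesis unfolding lag_simps Qg_def u v using t
        by (simp add: field_simps power2_eq_square)
    qed
    finally show ?thesis .
  qed
  have E: "intensity (vector [0, -1, -1, -\<rho>]) x = exp (-(t*(a+b) + (2-t)*(a*b)))"
  proof -
    have "- ?u - ?v - \<rho> * (?u * ?v) = -(t*(a+b) + (2-t)*(a*b))"
    proof -
      have u: "?u = t*a" and v: "?v = t*b" unfolding a_def b_def using t by auto
      have "\<rho> * (?u * ?v) = (\<rho> * t^2) * (a*b)" unfolding u v by (simp add: power2_eq_square mult_ac)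
      then show ?thesis using rho u v by (simp add: algebra_simps)
    qed
    then show ?thesis by (simp add: intensity_beta)
  qed
  have "Qg t (exp 2) (exp (t+2)) (a+b) (a*b) \<le> exp (t*(a+b) + (2-t)*(a*b))"
    by (rule main_ineq[OF t ab])
  then have "exp (-(t*(a+b) + (2-t)*(a*b))) * Qg t (exp 2) (exp (t+2)) (a+b) (a*b)
      \<le> exp (-(t*(a+b) + (2-t)*(a*b))) * exp (t*(a+b) + (2-t)*(a*b))"
    by (intro mult_left_mono) auto
  also have "\<dots> = 1" by (metis exp_minus_inverse mult.commute)
  finally show ?thesis unfolding S E .
qed


lemma t_facts:
  fixes \<rho> t :: real
  assumes "\<rho> \<ge> 0"
    and "t = (if \<rho> > 0 then (sqrt (1 + 8 * \<rho>) - 1) / (2 * \<rho>) else 2)"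
  shows "0 < t" "t \<le> 2" "\<rho> * t^2 = 2 - t"
proof -
  have "0 < t \<and> \<rho> * t^2 = 2 - t"
  proof (cases "\<rho> > 0")
    case True
    define s where "s = sqrt (1 + 8 * \<rho>)"
    have s1: "s > 1" unfolding s_def using True by (simp add: real_less_rsqrt)
    have s2: "s^2 = 1 + 8*\<rho>" unfolding s_def using True by simp
    have teq: "t = (s - 1)/(2*\<rho>)" using assms True unfolding s_def by simp
    have "0 < t" unfolding teq using s1 True by simp
    moreover have "\<rho> * t^2 = 2 - t"
    proof -
      have "\<rho> * t^2 + t = ((s-1)^2 + 2*(s-1))/(4*\<rho>)"
        unfolding teq using True by (simp add: field_simps power2_eq_square)
      also have "(s-1)^2 + 2*(s-1) = s^2 - 1" by (simp add: power2_eq_square algebra_simps)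
      also have "\<dots> = 8*\<rho>" using s2 by simp
      finally show ?thesis using True by simp
    qed
    ultimately show ?thesis by simp
  next
    case False
    then have "\<rho> = 0" using assms by simp
    then show ?thesis using assms by simp
  qed
  then show "0 < t" "\<rho> * t^2 = 2 - t" by auto
  have "\<rho> * t^2 \<ge> 0" using assms by simp
  then show "t \<le> 2" using \<open>0 < t \<and> \<rho> * t^2 = 2 - t\<close> by linarith
qed

theorem theorem2:
  fixes \<rho> t :: real
  assumes "\<rho> \<ge> 0"
    and "t = (if \<rho> > 0 then (sqrt (1 + 8 * \<rho>) - 1) / (2 * \<rho>) else 2)"
  shows "locally_D_optimal (vector [0, -1, -1, -\<rho>])
           {x :: real \<times> real. fst x \<ge> 0 \<and> snd x \<ge> 0}
           {(0, 0), (2, 0), (0, 2), (t, t)} (\<lambda>_. 1 / 4)"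
proof -
  note tf = t_facts[OF assms]
  have t0: "t \<noteq> 0" using tf by simp
  define \<beta> :: "real^4" where "\<beta> = vector [0, -1, -1, -\<rho>]"
  define X where "X = {x :: real \<times> real. fst x \<ge> 0 \<and> snd x \<ge> 0}"
  define S0 where "S0 = {(0::real, 0::real), (2, 0), (0, 2), (t, t)}"
  define w0 :: "real \<times> real \<Rightarrow> real" where "w0 = (\<lambda>_. 1 / 4)"
  have S0img: "S0 = pts t ` UNIV"
    unfolding S0_def UNIV4' by (auto simp: pts_simps)
  have injp: "inj (pts t)" by (rule inj_pts[OF t0])
  have card0: "card S0 = 4"
    unfolding S0img using injp by (simp add: card_image)
  have des0: "is_design X S0 w0"
    unfolding is_design_def
  proof (intro conjI)
    show "finite S0" unfolding S0_def by simp
    show "S0 \<noteq> {}" unfolding S0_def by simp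
    show "S0 \<subseteq> X" unfolding S0_def X_def using tf by auto
    show "\<forall>x\<in>S0. 0 \<le> w0 x" unfolding w0_def by simp
    show "(\<Sum>x\<in>S0. w0 x) = 1" unfolding w0_def using card0 by simp
  qed
  define lam where "lam i = intensity \<beta> (pts t i)" for i
  have lampos: "lam i > 0" for i unfolding lam_def intensity_def by simp
  define F :: "real^4^4" where "F = (\<chi> k j. regf (pts t k) $ j)"
  define N where "N S w = ((\<chi> i j. ipr S (\<lambda>x. w x * intensity \<beta> x) (lag t i) (lag t j)) :: real^4^4)" for S w
  have detinfo: "det (info_matrix \<beta> S w) = det F ^ 2 * det (N S w)" for S w
    unfolding F_def N_def by (rule det_info[OF t0])
  have N0: "det (N S0 w0) = (\<Prod>i\<in>UNIV. lam i / 4)"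
  proof -
    have "N S0 w0 $ i $ j = (if i = j then lam i / 4 else 0)" for i j
    proof -
      have "N S0 w0 $ i $ j = (\<Sum>x\<in>pts t ` UNIV. w0 x * intensity \<beta> x * lag t i x * lag t j x)"
        unfolding N_def ipr_def S0img by simp
      also have "\<dots> = (\<Sum>k\<in>UNIV. w0 (pts t k) * intensity \<beta> (pts t k) * lag t i (pts t k) * lag t j (pts t k))"
        by (rule sum.reindex_cong[OF injp refl refl])
      also have "\<dots> = (\<Sum>k\<in>UNIV. if k = i then (if i = j then lam i / 4 else 0) else 0)"
        by (intro sum.cong refl) (auto simp: lag_pts[OF t0] w0_def lam_def)
      also have "\<dots> = (if i = j then lam i / 4 else 0)" by simp
      finally show ?thesis .
    qed
    then show ?thesis by (subst det_diagonal) auto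
  qed
  have opt: "det (info_matrix \<beta> S w) \<le> det (info_matrix \<beta> S0 w0)" if des: "is_design X S w" for S w
  proof -
    have fin: "finite S" and sub: "S \<subseteq> X" and wpos: "\<And>x. x \<in> S \<Longrightarrow> w x \<ge> 0"
      and wsum: "(\<Sum>x\<in>S. w x) = 1"
      using des unfolding is_design_def by auto
    let ?c = "\<lambda>x. w x * intensity \<beta> x"
    have cpos: "?c x \<ge> 0" if "x \<in> S" for x
      using wpos[OF that] by (simp add: intensity_def)
    define D where "D i = ipr S ?c (lag t i) (lag t i)" for i
    have D0: "D i \<ge> 0" for i unfolding D_def by (rule ipr_nonneg) (rule cpos)
    have had: "det (N S w) \<le> (\<Prod>i\<in>UNIV. D i)"
      unfolding N_def D_def by (rule gram_hadamard[OF fin cpos])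
    define y where "y i = D i / lam i" for i
    have y0: "y i \<ge> 0" for i unfolding y_def using D0 lampos by (simp add: less_imp_le)
    have ysum: "(\<Sum>i\<in>UNIV. y i) \<le> 1"
    proof -
      have "(\<Sum>i\<in>UNIV. y i) = (\<Sum>i\<in>UNIV. \<Sum>x\<in>S. w x * (intensity \<beta> x * ((lag t i x)^2 / lam i)))"
        unfolding y_def D_def ipr_def by (simp add: sum_divide_distrib power2_eq_square mult_ac)
      also have "\<dots> = (\<Sum>x\<in>S. w x * (intensity \<beta> x * (\<Sum>i\<in>UNIV. (lag t i x)^2 / lam i)))"
        by (subst sum.swap) (simp add: sum_distrib_left)
      also have "\<dots> \<le> (\<Sum>x\<in>S. w x * 1)"
      proof (rule sum_mono)
        fix x assume xS: "x \<in> S"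
        then have "fst x \<ge> 0" "snd x \<ge> 0" using sub unfolding X_def by auto
        then have "intensity \<beta> x * (\<Sum>i\<in>UNIV. (lag t i x)^2 / lam i) \<le> 1"
          unfolding \<beta>_def lam_def by (rule pointwise[OF tf(1) tf(2) tf(3)])
        then show "w x * (intensity \<beta> x * (\<Sum>i\<in>UNIV. (lag t i x)^2 / lam i)) \<le> w x * 1"
          using wpos[OF xS] by (rule mult_left_mono)
      qed
      also have "\<dots> = 1" using wsum by simp
      finally show ?thesis .
    qed
    have "(\<Prod>i\<in>UNIV. D i) = (\<Prod>i\<in>UNIV. lam i) * (\<Prod>i\<in>UNIV. y i)"
      unfolding y_def using lampos by (simp add: prod.distrib[symmetric] less_imp_neq[symmetric])
    also have "\<dots> \<le> (\<Prod>i\<in>UNIV. lam i) * ((\<Sum>i\<in>UNIV. y i)/4)^4"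
      using amgm4[OF y0] lampos by (intro mult_left_mono) (auto intro: prod_nonneg less_imp_le)
    also have "\<dots> \<le> (\<Prod>i\<in>UNIV. lam i) * (1/4)^4"
    proof -
      have "((\<Sum>i\<in>UNIV. y i)/4)^4 \<le> (1/4)^4"
        using ysum y0 by (intro power_mono) (auto intro: sum_nonneg)
      then show ?thesis using lampos by (intro mult_left_mono) (auto intro: prod_nonneg less_imp_le)
    qed
    also have "\<dots> = (\<Prod>i\<in>UNIV. lam i / 4)"
      unfolding prod4' by (simp add: field_simps)
    finally have "det (N S w) \<le> det (N S0 w0)" using had N0 by simp
    then have "det F ^ 2 * det (N S w) \<le> det F ^ 2 * det (N S0 w0)"
      by (intro mult_left_mono) auto
    then show ?thesis unfolding detinfo .
  qed
  show ?thesis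
    unfolding locally_D_optimal_def
    using des0 opt unfolding \<beta>_def X_def S0_def w0_def by blast
qed

end
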